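(* Let $k \ge 1$ and $m \ge 1$, and define \[ a(n) = \begin{cases} \frac14\binom{n+2}{3}, & n \text{ even},\\ \frac{1}{24}(n-1)(n+1)(n+3), & n \text{ odd}\end{cases} \] (the number of odd biGrassmannian permutations of $[n]$). Then the number of odd biGrassmannian permutations of $[m]$ that avoid $\operatorname{id}_k=12\cdots k$ equals $a(m)$ if $m \le k$; equals $a(2k-m)$ if $k < m < 2k$ and $m-k$ is even; equals $a(2k-m-2)$ if $k < m < 2k$ and $m-k$ is odd; and equals $0$ if $m \ge 2k$.
   Context: A permutation is Grassmannian if it has at most one descent; it is biGrassmannian if both it and its inverse are Grassmannian; it is odd if it has an odd number of inversions. A permutation avoids $12\cdots k$ if it has no increasing subsequence of length $k$. *)

theory Defs
  imports Complex_Main "HOL-Combinatorics.Permutations"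
begin

text \<open>Permutations of [m] = {1..m} are functions p with p permutes {1..m}.\<close>

definition descents :: "nat \<Rightarrow> (nat \<Rightarrow> nat) \<Rightarrow> nat set" where
  "descents m p = {i. 1 \<le> i \<and> i < m \<and> p i > p (Suc i)}"

definition grassmannian :: "nat \<Rightarrow> (nat \<Rightarrow> nat) \<Rightarrow> bool" where
  "grassmannian m p \<longleftrightarrow> card (descents m p) \<le> 1"

definition bigrassmannian :: "nat \<Rightarrow> (nat \<Rightarrow> nat) \<Rightarrow> bool" where
  "bigrassmannian m p \<longleftrightarrow> grassmannian m p \<and> grassmannian m (inv p)"

definition inversions :: "nat \<Rightarrow> (nat \<Rightarrow> nat) \<Rightarrow> (nat \<times> nat) set" where
  "inversions m p = {(i, j). 1 \<le> i \<and> i < j \<and> j \<le> m \<and> p i > p j}"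

definition odd_perm :: "nat \<Rightarrow> (nat \<Rightarrow> nat) \<Rightarrow> bool" where
  "odd_perm m p \<longleftrightarrow> odd (card (inversions m p))"

definition avoids_id :: "nat \<Rightarrow> nat \<Rightarrow> (nat \<Rightarrow> nat) \<Rightarrow> bool" where
  "avoids_id k m p \<longleftrightarrow>
     \<not> (\<exists>I. I \<subseteq> {1..m} \<and> card I = k \<and> (\<forall>x\<in>I. \<forall>y\<in>I. x < y \<longrightarrow> p x < p y))"

definition a_seq :: "int \<Rightarrow> rat" where
  "a_seq n = (if even n then (1/4) * of_nat (nat (n + 2) choose 3)
              else (1/24) * of_int (n - 1) * of_int (n + 1) * of_int (n + 3))"

end

theory Submission
  imports Defs
begin

lemma chain_mono:
  fixes f :: "nat \<Rightarrow> nat"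
  assumes "\<And>x. a \<le> x \<Longrightarrow> Suc x \<le> b \<Longrightarrow> f x < f (Suc x)"
  shows "a \<le> x \<Longrightarrow> x < y \<Longrightarrow> y \<le> b \<Longrightarrow> f x < f y"
proof (induction y)
  case 0 then show ?case by simp
next
  case (Suc y)
  show ?case
  proof (cases "x = y")
    case True then show ?thesis using assms Suc.prems by simp
  next
    case False
    then have "f x < f y" using Suc by simp
    also have "f y < f (Suc y)" using assms Suc.prems False by simp
    finally show ?thesis .
  qed
qed

lemma mono_bij_interval:
  fixes f :: "nat \<Rightarrow> nat"
  assumes mono: "\<And>x y. a \<le> x \<Longrightarrow> x < y \<Longrightarrow> y < b \<Longrightarrow> f x < f y"
  and bij: "bij_betw f {a..<b} {c..<c'}"
  and x: "a \<le> x" "x < b"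
  shows "f x = c + (x - a)"
proof -
  have card: "b - a = c' - c" using bij_betw_same_card[OF bij] by simp
  have img: "\<And>y. a \<le> y \<Longrightarrow> y < b \<Longrightarrow> c \<le> f y \<and> f y < c'"
    using bij_betw_imp_surj_on[OF bij] by auto
  have lo: "\<And>j. a + j < b \<Longrightarrow> c + j \<le> f (a + j)"
  proof -
    fix j show "a + j < b \<Longrightarrow> c + j \<le> f (a + j)"
    proof (induction j)
      case 0 then show ?case using img[of a] by simp
    next
      case (Suc j)
      then have "c + j \<le> f (a + j)" by simp
      moreover have "f (a + j) < f (a + Suc j)" using mono[of "a+j" "a + Suc j"] Suc.prems by simp
      ultimately show ?case by simp
    qed
  qed
  have hi: "\<And>j. j < b - a \<Longrightarrow> f (b - Suc j) + j < c'"
  proof -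
    fix j show "j < b - a \<Longrightarrow> f (b - Suc j) + j < c'"
    proof (induction j)
      case 0 then show ?case using img[of "b - 1"] by simp
    next
      case (Suc j)
      then have "f (b - Suc j) + j < c'" by simp
      moreover have "f (b - Suc (Suc j)) < f (b - Suc j)" using mono[of "b - Suc (Suc j)" "b - Suc j"] Suc.prems by simp
      ultimately show ?case by simp
    qed
  qed
  have "c + (x - a) \<le> f x" using lo[of "x - a"] x by simp
  moreover have "f x + (b - Suc x) < c'" using hi[of "b - Suc x"] x by (simp add: Suc_diff_Suc)
  ultimately show ?thesis using card x by linarith
qed

lemma downclosed_interval:
  fixes S :: "nat set"
  assumes S: "S \<subseteq> {a..<b}" and ab: "a \<le> b" and dc: "\<And>x y. x \<in> S \<Longrightarrow> a \<le> y \<Longrightarrow> y \<le> x \<Longrightarrow> y \<in> S"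
  shows "\<exists>t. a \<le> t \<and> t \<le> b \<and> S = {a..<t}"
proof (cases "S = {}")
  case True then show ?thesis using ab by (intro exI[of _ a]) auto
next
  case False
  have fin: "finite S" using S finite_subset by blast
  define t where "t = Suc (Max S)"
  have M: "Max S \<in> S" using Max_in[OF fin False] .
  then have M2: "a \<le> Max S \<and> Max S < b" using S by auto
  have "S = {a..<t}"
  proof
    show "S \<subseteq> {a..<t}"
    proof
      fix x assume "x \<in> S"
      then have "x \<le> Max S" "a \<le> x" using Max_ge[OF fin] S by auto
      then show "x \<in> {a..<t}" unfolding t_def by simp
    qed
    show "{a..<t} \<subseteq> S"
    proof
      fix x assume "x \<in> {a..<t}"
      then show "x \<in> S" using dc[OF M, of x] unfolding t_def by simp
    qed
  qed
  then show ?thesis using M2 by (intro exI[of _ t]) (auto simp: t_def)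
qed

definition bs :: "nat \<Rightarrow> nat \<Rightarrow> nat \<Rightarrow> nat \<Rightarrow> nat" where
  "bs i r s x = (if x \<le> i then x else if x \<le> i + s then x + r else if x \<le> i + s + r then x - s else x)"

lemma bs_inv_pt: "bs i s r (bs i r s x) = x"
  unfolding bs_def by auto

lemma bs_comp: "bs i s r \<circ> bs i r s = id"
  using bs_inv_pt by (auto simp: fun_eq_iff)

lemma bs_bij: "bij (bs i r s)"
  using bs_comp[of i s r] bs_comp[of i r s] by (rule o_bij)

lemma bs_inv: "inv (bs i r s) = bs i s r"
  using bs_comp[of i r s] bs_comp[of i s r] by (rule inv_unique_comp)

lemma bs_permutes:
  assumes "i + r + s \<le> m"
  shows "bs i r s permutes {1..m}"
proof (rule bij_imp_permutes)
  show fix0: "\<And>x. x \<notin> {1..m} \<Longrightarrow> bs i r s x = x" using assms unfolding bs_def by auto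
  have "bs i r s ` {1..m} \<subseteq> {1..m}" using assms unfolding bs_def by auto
  moreover have "{1..m} \<subseteq> bs i r s ` {1..m}"
  proof
    fix y assume y: "y \<in> {1..m}"
    have "bs i r s (bs i s r y) = y" using bs_inv_pt[of i r s y] by simp
    moreover have "bs i s r y \<in> {1..m}" using y assms unfolding bs_def by auto
    ultimately show "y \<in> bs i r s ` {1..m}" by (metis image_eqI)
  qed
  ultimately have "bs i r s ` {1..m} = {1..m}" by blast
  then show "bij_betw (bs i r s) {1..m} {1..m}"
    by (intro bij_betw_imageI) (auto intro: inj_on_subset[OF bij_is_inj[OF bs_bij]])
qed

lemma bs_descents: "descents m (bs i r s) \<subseteq> {i + s}"
  unfolding descents_def bs_def by (auto split: if_splits)

lemma bs_grass: "grassmannian m (bs i r s)"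
proof -
  have "card (descents m (bs i r s)) \<le> card {i + s}"
    by (rule card_mono[OF _ bs_descents]) simp
  then show ?thesis unfolding grassmannian_def by simp
qed

lemma bs_bigrass: "bigrassmannian m (bs i r s)"
  unfolding bigrassmannian_def bs_inv using bs_grass by simp

lemma bs_inversions:
  assumes "i + r + s \<le> m"
  shows "inversions m (bs i r s) = {i+1..i+s} \<times> {i+s+1..i+s+r}"
  using assms unfolding inversions_def bs_def by (auto split: if_splits)

lemma bs_card_inv:
  assumes "i + r + s \<le> m"
  shows "card (inversions m (bs i r s)) = s * r"
  using bs_inversions[OF assms] by (simp add: card_cartesian_product)

lemma bs_inj:
  assumes r: "1 \<le> r" "1 \<le> s" "1 \<le> r'" "1 \<le> s'" and eq: "bs i r s = bs i' r' s'"
  shows "i = i' \<and> r = r' \<and> s = s'"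
proof -
  have e: "\<And>x. bs i r s x = bs i' r' s' x" using eq by simp
  have ii: "i = i'"
  proof (rule ccontr)
    assume "i \<noteq> i'"
    then have "i < i' \<or> i' < i" by auto
    then show False
    proof
      assume "i < i'" then show False using e[of "Suc i"] r unfolding bs_def by (auto split: if_splits)
    next
      assume "i' < i" then show False using e[of "Suc i'"] r unfolding bs_def by (auto split: if_splits)
    qed
  qed
  have rr: "r = r'" using e[of "Suc i"] r ii unfolding bs_def by (auto split: if_splits)
  have ss: "s = s'"
  proof (rule ccontr)
    assume "s \<noteq> s'"
    then have "s < s' \<or> s' < s" by auto
    then show False
    proof
      assume "s < s'" then show False using e[of "Suc (i + s)"] r ii rr unfolding bs_def by (auto split: if_splits)
    next
      assume "s' < s" then show False using e[of "Suc (i + s')"] r ii rr unfolding bs_def by (auto split: if_splits)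
    qed
  qed
  show ?thesis using ii rr ss by simp
qed

lemma bs_avoids:
  assumes m: "i + r + s \<le> m" and r: "1 \<le> r" "1 \<le> s"
  shows "avoids_id k m (bs i r s) \<longleftrightarrow> m - min r s < k"
proof -
  define B1 where "B1 = {i+1..i+s}"
  define B2 where "B2 = {i+s+1..i+s+r}"
  have cB1: "card B1 = s" and cB2: "card B2 = r" unfolding B1_def B2_def by auto
  have B1s: "B1 \<subseteq> {1..m}" and B2s: "B2 \<subseteq> {1..m}" using m unfolding B1_def B2_def by auto
  have notboth: "\<And>x y. x \<in> B1 \<Longrightarrow> y \<in> B2 \<Longrightarrow> x < y \<and> bs i r s x > bs i r s y"
    unfolding B1_def B2_def bs_def by auto
  have inc1: "\<And>x y. x \<in> {1..m} - B1 \<Longrightarrow> y \<in> {1..m} - B1 \<Longrightarrow> x < y \<Longrightarrow> bs i r s x < bs i r s y"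
    unfolding B1_def bs_def by (auto split: if_splits)
  have inc2: "\<And>x y. x \<in> {1..m} - B2 \<Longrightarrow> y \<in> {1..m} - B2 \<Longrightarrow> x < y \<Longrightarrow> bs i r s x < bs i r s y"
    unfolding B2_def bs_def by (auto split: if_splits)
  have cD1: "card ({1..m} - B1) = m - s" using B1s cB1 by (simp add: card_Diff_subset finite_subset)
  have cD2: "card ({1..m} - B2) = m - r" using B2s cB2 by (simp add: card_Diff_subset finite_subset)
  show ?thesis
  proof
    assume av: "avoids_id k m (bs i r s)"
    show "m - min r s < k"
    proof (rule ccontr)
      assume "\<not> m - min r s < k"
      then have kle: "k \<le> m - min r s" by simp
      define J where "J = (if r \<le> s then {1..m} - B2 else {1..m} - B1)"
      have cJ: "card J = m - min r s" using cD1 cD2 unfolding J_def by auto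
      have incJ: "\<forall>x\<in>J. \<forall>y\<in>J. x < y \<longrightarrow> bs i r s x < bs i r s y"
        unfolding J_def using inc1 inc2 by auto
      obtain I where I: "I \<subseteq> J" "card I = k" "finite I" using obtain_subset_with_card_n[of k J] kle cJ by auto
      have "I \<subseteq> {1..m}" using I(1) unfolding J_def by (auto split: if_splits)
      moreover have "\<forall>x\<in>I. \<forall>y\<in>I. x < y \<longrightarrow> bs i r s x < bs i r s y" using incJ I(1) by blast
      ultimately show False using av I(2) unfolding avoids_id_def by blast
    qed
  next
    assume lt: "m - min r s < k"
    show "avoids_id k m (bs i r s)"
      unfolding avoids_id_def
    proof
      assume "\<exists>I. I \<subseteq> {1..m} \<and> card I = k \<and> (\<forall>x\<in>I. \<forall>y\<in>I. x < y \<longrightarrow> bs i r s x < bs i r s y)"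
      then obtain I where I: "I \<subseteq> {1..m}" "card I = k" "\<forall>x\<in>I. \<forall>y\<in>I. x < y \<longrightarrow> bs i r s x < bs i r s y" by blast
      show False
      proof (cases "I \<inter> B1 = {}")
        case True
        then have "I \<subseteq> {1..m} - B1" using I(1) by blast
        then have "card I \<le> m - s" using cD1 card_mono[of "{1..m} - B1" I] by simp
        then show False using I(2) lt by simp
      next
        case False
        then obtain x where x: "x \<in> I" "x \<in> B1" by blast
        have "I \<inter> B2 = {}"
        proof (rule ccontr)
          assume "I \<inter> B2 \<noteq> {}"
          then obtain y where y: "y \<in> I" "y \<in> B2" by blast
          show False using notboth[OF x(2) y(2)] I(3) x(1) y(1) by force
        qed
        then have "I \<subseteq> {1..m} - B2" using I(1) by blast
        then have "card I \<le> m - r" using cD2 card_mono[of "{1..m} - B2" I] by simp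
        then show False using I(2) lt by simp
      qed
    qed
  qed
qed

lemma grass_split:
  assumes p: "p permutes {1..m}" and g: "grassmannian m p"
  shows "\<exists>d\<le>m. (\<forall>x y. 1 \<le> x \<longrightarrow> x < y \<longrightarrow> y \<le> d \<longrightarrow> p x < p y) \<and>
                (\<forall>x y. d < x \<longrightarrow> x < y \<longrightarrow> y \<le> m \<longrightarrow> p x < p y)"
proof -
  have inj: "inj p" using permutes_inj[OF p] .
  have fin: "finite (descents m p)" unfolding descents_def by (rule finite_subset[of _ "{..<m}"]) auto
  have one: "\<forall>a\<in>descents m p. \<forall>b\<in>descents m p. a = b"
    using g card_le_Suc0_iff_eq[OF fin] unfolding grassmannian_def by simp
  have step: "\<And>x. 1 \<le> x \<Longrightarrow> x < m \<Longrightarrow> x \<notin> descents m p \<Longrightarrow> p x < p (Suc x)"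
  proof -
    fix x assume "1 \<le> x" "x < m" "x \<notin> descents m p"
    then have "\<not> p x > p (Suc x)" unfolding descents_def by auto
    moreover have "p x \<noteq> p (Suc x)" using inj by (metis injD n_not_Suc_n)
    ultimately show "p x < p (Suc x)" by simp
  qed
  obtain d where d: "d \<le> m" "\<And>x. x \<in> descents m p \<Longrightarrow> x = d"
  proof (cases "descents m p = {}")
    case True then show ?thesis using that[of m] by auto
  next
    case False
    then obtain d0 where d0: "d0 \<in> descents m p" by blast
    then have "d0 \<le> m" unfolding descents_def by auto
    then show ?thesis using that[of d0] one d0 by blast
  qed
  have s1: "\<And>x. 1 \<le> x \<Longrightarrow> Suc x \<le> d \<Longrightarrow> p x < p (Suc x)"
  proof -
    fix x assume "1 \<le> x" "Suc x \<le> d"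
    then show "p x < p (Suc x)" using step[of x] d(2)[of x] d(1) by fastforce
  qed
  have s2: "\<And>x. Suc d \<le> x \<Longrightarrow> Suc x \<le> m \<Longrightarrow> p x < p (Suc x)"
  proof -
    fix x assume "Suc d \<le> x" "Suc x \<le> m"
    then show "p x < p (Suc x)" using step[of x] d(2)[of x] by fastforce
  qed
  have m1: "\<And>x y. 1 \<le> x \<Longrightarrow> x < y \<Longrightarrow> y \<le> d \<Longrightarrow> p x < p y"
    using chain_mono[of 1 d p, OF s1] by blast
  have m2: "\<And>x y. Suc d \<le> x \<Longrightarrow> x < y \<Longrightarrow> y \<le> m \<Longrightarrow> p x < p y"
    using chain_mono[of "Suc d" m p, OF s2] by blast
  show ?thesis using d(1) m1 m2 by (intro exI[of _ d]) (auto simp: Suc_le_eq)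
qed

lemma bij_helper:
  assumes "inj p" "\<And>x. x \<in> X \<Longrightarrow> p x \<in> Y" "\<And>v. v \<in> Y \<Longrightarrow> q v \<in> X" "\<And>v. p (q v) = v"
  shows "bij_betw p X Y"
proof (rule bij_betw_imageI)
  show "inj_on p X" using assms(1) inj_on_subset by blast
  show "p ` X = Y"
  proof
    show "p ` X \<subseteq> Y" using assms(2) by blast
    show "Y \<subseteq> p ` X"
    proof
      fix v assume "v \<in> Y"
      then have "q v \<in> X" using assms(3) by blast
      then show "v \<in> p ` X" using assms(4)[of v] by (metis image_eqI)
    qed
  qed
qed

lemma downclosed_interval2:
  fixes P :: "nat \<Rightarrow> bool"
  assumes "a \<le> b" "\<And>x y. a \<le> y \<Longrightarrow> y \<le> x \<Longrightarrow> x < b \<Longrightarrow> P x \<Longrightarrow> P y"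
  shows "\<exists>t. a \<le> t \<and> t \<le> b \<and> {x \<in> {a..<b}. P x} = {a..<t}"
proof (rule downclosed_interval)
  fix x y assume "x \<in> {x \<in> {a..<b}. P x}" "a \<le> y" "y \<le> x"
  then show "y \<in> {x \<in> {a..<b}. P x}" using assms(2)[of y x] by auto
qed (use assms(1) in auto)

lemma char:
  assumes p: "p permutes {1..m}" and bg: "bigrassmannian m p"
  shows "\<exists>i r s. i + r + s \<le> m \<and> p = bs i r s"
proof -
  define q where "q = inv p"
  have q: "q permutes {1..m}" using permutes_inv[OF p] q_def by simp
  have pq: "\<And>v. p (q v) = v" and qp: "\<And>x. q (p x) = x" using permutes_inverses[OF p] q_def by auto
  have pin: "\<And>x. 1 \<le> x \<Longrightarrow> x \<le> m \<Longrightarrow> 1 \<le> p x \<and> p x \<le> m" using permutes_in_image[OF p] by auto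
  have qin: "\<And>x. 1 \<le> x \<Longrightarrow> x \<le> m \<Longrightarrow> 1 \<le> q x \<and> q x \<le> m" using permutes_in_image[OF q] by auto
  have pfix: "\<And>x. x \<notin> {1..m} \<Longrightarrow> p x = x" using permutes_not_in[OF p] by blast
  have injp: "inj p" using permutes_inj[OF p] .
  have injq: "inj q" using permutes_inj[OF q] .
  obtain d where d: "d \<le> m" and pm1: "\<And>x y. 1 \<le> x \<Longrightarrow> x < y \<Longrightarrow> y \<le> d \<Longrightarrow> p x < p y"
      and pm2: "\<And>x y. d < x \<Longrightarrow> x < y \<Longrightarrow> y \<le> m \<Longrightarrow> p x < p y"
    using grass_split[OF p] bg unfolding bigrassmannian_def by blast
  obtain e where e: "e \<le> m" and qm1: "\<And>x y. 1 \<le> x \<Longrightarrow> x < y \<Longrightarrow> y \<le> e \<Longrightarrow> q x < q y"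
      and qm2: "\<And>x y. e < x \<Longrightarrow> x < y \<Longrightarrow> y \<le> m \<Longrightarrow> q x < q y"
    using grass_split[OF q] bg unfolding bigrassmannian_def q_def by blast
  have pm1': "\<And>x y. 1 \<le> x \<Longrightarrow> x \<le> y \<Longrightarrow> y \<le> d \<Longrightarrow> p x \<le> p y"
    using pm1 by (metis le_less)
  have pm2': "\<And>x y. d < x \<Longrightarrow> x \<le> y \<Longrightarrow> y \<le> m \<Longrightarrow> p x \<le> p y"
    using pm2 by (metis le_less)
  have qm1': "\<And>x y. 1 \<le> x \<Longrightarrow> x \<le> y \<Longrightarrow> y \<le> e \<Longrightarrow> q x \<le> q y"
    using qm1 by (metis le_less)
  have qm2': "\<And>x y. e < x \<Longrightarrow> x \<le> y \<Longrightarrow> y \<le> m \<Longrightarrow> q x \<le> q y"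
    using qm2 by (metis le_less)
  obtain \<alpha> where al: "1 \<le> \<alpha>" "\<alpha> \<le> d + 1" and A1: "{x \<in> {1..<d+1}. p x \<le> e} = {1..<\<alpha>}"
  proof -
    have "\<exists>t. 1 \<le> t \<and> t \<le> d + 1 \<and> {x \<in> {1..<d+1}. p x \<le> e} = {1..<t}"
      by (rule downclosed_interval2) (simp, (rule order.trans[OF pm1']; simp))
    then show ?thesis using that by blast
  qed
  obtain \<beta> where be: "d + 1 \<le> \<beta>" "\<beta> \<le> m + 1" and B1: "{x \<in> {d+1..<m+1}. p x \<le> e} = {d+1..<\<beta>}"
  proof -
    have "\<exists>t. d + 1 \<le> t \<and> t \<le> m + 1 \<and> {x \<in> {d+1..<m+1}. p x \<le> e} = {d+1..<t}"
      by (rule downclosed_interval2) (use d in simp, (rule order.trans[OF pm2']; simp))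
    then show ?thesis using that by blast
  qed
  obtain \<gamma> where ga: "1 \<le> \<gamma>" "\<gamma> \<le> e + 1" and C1: "{v \<in> {1..<e+1}. q v \<le> d} = {1..<\<gamma>}"
  proof -
    have "\<exists>t. 1 \<le> t \<and> t \<le> e + 1 \<and> {v \<in> {1..<e+1}. q v \<le> d} = {1..<t}"
      by (rule downclosed_interval2) (simp, (rule order.trans[OF qm1']; simp))
    then show ?thesis using that by blast
  qed
  obtain \<delta> where de: "e + 1 \<le> \<delta>" "\<delta> \<le> m + 1" and C2: "{v \<in> {e+1..<m+1}. q v \<le> d} = {e+1..<\<delta>}"
  proof -
    have "\<exists>t. e + 1 \<le> t \<and> t \<le> m + 1 \<and> {v \<in> {e+1..<m+1}. q v \<le> d} = {e+1..<t}"
      by (rule downclosed_interval2) (use e in simp, (rule order.trans[OF qm2']; simp))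
    then show ?thesis using that by blast
  qed
  have hA: "\<And>x. x \<in> {1..<\<alpha>} \<longleftrightarrow> (1 \<le> x \<and> x \<le> d \<and> p x \<le> e)"
    by (subst A1[symmetric]) auto
  have hB: "\<And>x. x \<in> {d+1..<\<beta>} \<longleftrightarrow> (d + 1 \<le> x \<and> x \<le> m \<and> p x \<le> e)"
    by (subst B1[symmetric]) auto
  have hC: "\<And>v. v \<in> {1..<\<gamma>} \<longleftrightarrow> (1 \<le> v \<and> v \<le> e \<and> q v \<le> d)"
    by (subst C1[symmetric]) auto
  have hD: "\<And>v. v \<in> {e+1..<\<delta>} \<longleftrightarrow> (e + 1 \<le> v \<and> v \<le> m \<and> q v \<le> d)"
    by (subst C2[symmetric]) auto
  have bij1: "bij_betw p {1..<\<alpha>} {1..<\<gamma>}"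
  proof (rule bij_helper[OF injp _ _ pq])
    fix x assume "x \<in> {1..<\<alpha>}"
    then show "p x \<in> {1..<\<gamma>}" unfolding hA hC using pin[of x] qp[of x] d by auto
  next
    fix v assume "v \<in> {1..<\<gamma>}"
    then show "q v \<in> {1..<\<alpha>}" unfolding hA hC using qin[of v] pq[of v] e by auto
  qed
  have bij2: "bij_betw p {\<alpha>..<d+1} {e+1..<\<delta>}"
  proof (rule bij_helper[OF injp _ _ pq])
    fix x assume x: "x \<in> {\<alpha>..<d+1}"
    then have "x \<notin> {1..<\<alpha>}" by auto
    then show "p x \<in> {e+1..<\<delta>}" unfolding hA hD using x al pin[of x] qp[of x] d by auto
  next
    fix v assume "v \<in> {e+1..<\<delta>}"
    then show "q v \<in> {\<alpha>..<d+1}" using hA[of "q v"] hD[of v] qin[of v] pq[of v] e by auto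
  qed
  have bij3: "bij_betw p {d+1..<\<beta>} {\<gamma>..<e+1}"
  proof (rule bij_helper[OF injp _ _ pq])
    fix x assume x: "x \<in> {d+1..<\<beta>}"
    then show "p x \<in> {\<gamma>..<e+1}" using hB[of x] hC[of "p x"] pin[of x] qp[of x] d by auto
  next
    fix v assume v: "v \<in> {\<gamma>..<e+1}"
    then have "v \<notin> {1..<\<gamma>}" by auto
    then show "q v \<in> {d+1..<\<beta>}" using v hB[of "q v"] hC[of v] ga qin[of v] pq[of v] e by auto
  qed
  have bij4: "bij_betw p {\<beta>..<m+1} {\<delta>..<m+1}"
  proof (rule bij_helper[OF injp _ _ pq])
    fix x assume x: "x \<in> {\<beta>..<m+1}"
    then have "x \<notin> {d+1..<\<beta>}" by auto
    then show "p x \<in> {\<delta>..<m+1}" using x be hB[of x] hD[of "p x"] pin[of x] qp[of x] d by auto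
  next
    fix v assume v: "v \<in> {\<delta>..<m+1}"
    then have "v \<notin> {e+1..<\<delta>}" by auto
    then show "q v \<in> {\<beta>..<m+1}" using v de hB[of "q v"] hD[of v] qin[of v] pq[of v] e by auto
  qed
  have c1: "\<alpha> - 1 = \<gamma> - 1" using bij_betw_same_card[OF bij1] by simp
  have c2: "d + 1 - \<alpha> = \<delta> - (e + 1)" using bij_betw_same_card[OF bij2] by simp
  have c3: "\<beta> - (d + 1) = e + 1 - \<gamma>" using bij_betw_same_card[OF bij3] by simp
  have c4: "m + 1 - \<beta> = m + 1 - \<delta>" using bij_betw_same_card[OF bij4] by simp
  have f1: "\<And>x. 1 \<le> x \<Longrightarrow> x < \<alpha> \<Longrightarrow> p x = 1 + (x - 1)"
    by (rule mono_bij_interval[OF _ bij1]) (use pm1 al in auto)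
  have f2: "\<And>x. \<alpha> \<le> x \<Longrightarrow> x < d + 1 \<Longrightarrow> p x = e + 1 + (x - \<alpha>)"
    by (rule mono_bij_interval[OF _ bij2]) (use pm1 al in auto)
  have f3: "\<And>x. d + 1 \<le> x \<Longrightarrow> x < \<beta> \<Longrightarrow> p x = \<gamma> + (x - (d + 1))"
    by (rule mono_bij_interval[OF _ bij3]) (use pm2 be in auto)
  have f4: "\<And>x. \<beta> \<le> x \<Longrightarrow> x < m + 1 \<Longrightarrow> p x = \<delta> + (x - \<beta>)"
    by (rule mono_bij_interval[OF _ bij4]) (use pm2 be in auto)
  have ag: "\<gamma> = \<alpha>" using c1 al ga by linarith
  have bd: "\<delta> = \<beta>" using c4 be de by linarith
  define i where "i = \<alpha> - 1"
  define s where "s = d + 1 - \<alpha>"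
  define r where "r = e + 1 - \<alpha>"
  have irs: "i + r + s \<le> m" using c1 c3 al be ga unfolding i_def r_def s_def by linarith
  have "\<forall>x. p x = bs i r s x"
  proof
    fix x
    consider "x \<notin> {1..m}" | "1 \<le> x" "x < \<alpha>" | "\<alpha> \<le> x" "x < d + 1" | "d + 1 \<le> x" "x < \<beta>" | "\<beta> \<le> x" "x < m + 1"
      using al be by fastforce
    then show "p x = bs i r s x"
    proof cases
      case 1 then show ?thesis using pfix[OF 1] irs unfolding bs_def by auto
    next
      case 2 then show ?thesis using f1[OF 2] unfolding bs_def i_def by auto
    next
      case 3 then show ?thesis using f2[OF 3] al ga c1 unfolding bs_def i_def r_def s_def by auto
    next
      case 4 then show ?thesis using f3[OF 4] al ga be c1 c3 ag unfolding bs_def i_def r_def s_def by auto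
    next
      case 5 then show ?thesis using f4[OF 5] al ga be de c1 c2 c3 c4 ag bd unfolding bs_def i_def r_def s_def by auto
    qed
  qed
  then show ?thesis using irs by (intro exI[of _ i] exI[of _ r] exI[of _ s]) auto
qed

definition Fc :: "nat \<Rightarrow> nat" where "Fc n = card {(i::nat, b::nat). i + 2*b \<le> n}"
definition Mc :: "nat \<Rightarrow> nat" where "Mc n = card {(i::nat, a::nat, b::nat). i + 2*a + 2*b \<le> n}"

lemma fin2: "finite {(i::nat, b::nat). i + 2*b \<le> n}"
  by (rule finite_subset[of _ "{..n} \<times> {..n}"]) auto

lemma fin3: "finite {(i::nat, a::nat, b::nat). i + 2*a + 2*b \<le> n}"
  by (rule finite_subset[of _ "{..n} \<times> {..n} \<times> {..n}"]) auto

lemma Fc_rec: "Fc (n + 2) = Fc n + (n + 3)"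
proof -
  have eq: "{(i::nat, b::nat). i + 2*b \<le> n + 2} = (\<lambda>i. (i, 0)) ` {..n+2} \<union> (\<lambda>(i,b). (i, Suc b)) ` {(i, b). i + 2*b \<le> n}"
  proof (rule set_eqI, clarify)
    fix i b :: nat
    show "((i, b) \<in> {(i, b). i + 2 * b \<le> n + 2}) = ((i, b) \<in> (\<lambda>i. (i, 0)) ` {..n + 2} \<union> (\<lambda>(i, b). (i, Suc b)) ` {(i, b). i + 2 * b \<le> n})"
    proof (cases b)
      case 0 then show ?thesis by auto
    next
      case (Suc b') then show ?thesis by (auto simp: image_iff)
    qed
  qed
  have d: "(\<lambda>i. (i, 0::nat)) ` {..n+2} \<inter> (\<lambda>(i,b). (i, Suc b)) ` {(i, b). i + 2*b \<le> n} = {}" by auto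
  have c1: "card ((\<lambda>i. (i, 0::nat)) ` {..n+2}) = n + 3" by (subst card_image) (auto simp: inj_on_def)
  have c2: "card ((\<lambda>(i,b). (i, Suc b)) ` {(i::nat, b::nat). i + 2*b \<le> n}) = Fc n"
    unfolding Fc_def by (rule card_image) (auto simp: inj_on_def)
  show ?thesis unfolding Fc_def[of "n+2"] eq
    using card_Un_disjoint[OF _ _ d] fin2[of n] c1 c2 by simp
qed

lemma Mc_rec: "Mc (n + 2) = Mc n + Fc (n + 2)"
proof -
  have eq: "{(i::nat, a::nat, b::nat). i + 2*a + 2*b \<le> n + 2} = (\<lambda>(i,b). (i, 0, b)) ` {(i, b). i + 2*b \<le> n + 2} \<union> (\<lambda>(i,a,b). (i, Suc a, b)) ` {(i, a, b). i + 2*a + 2*b \<le> n}"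
  proof (rule set_eqI, clarify)
    fix i a b :: nat
    show "((i, a, b) \<in> {(i, a, b). i + 2*a + 2*b \<le> n + 2}) = ((i, a, b) \<in> (\<lambda>(i,b). (i, 0, b)) ` {(i, b). i + 2*b \<le> n + 2} \<union> (\<lambda>(i,a,b). (i, Suc a, b)) ` {(i, a, b). i + 2*a + 2*b \<le> n})"
    proof (cases a)
      case 0 then show ?thesis by (auto simp: image_iff)
    next
      case (Suc a') then show ?thesis by (auto simp: image_iff)
    qed
  qed
  have d: "(\<lambda>(i,b). (i, 0::nat, b)) ` {(i::nat, b::nat). i + 2*b \<le> n + 2} \<inter> (\<lambda>(i,a,b). (i, Suc a, b)) ` {(i::nat, a::nat, b::nat). i + 2*a + 2*b \<le> n} = {}" by auto
  have c1: "card ((\<lambda>(i,b). (i, 0::nat, b)) ` {(i::nat, b::nat). i + 2*b \<le> n + 2}) = Fc (n+2)"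
    unfolding Fc_def by (rule card_image) (auto simp: inj_on_def)
  have c2: "card ((\<lambda>(i,a,b). (i, Suc a, b)) ` {(i::nat, a::nat, b::nat). i + 2*a + 2*b \<le> n}) = Mc n"
    unfolding Mc_def by (rule card_image) (auto simp: inj_on_def)
  show ?thesis unfolding Mc_def[of "n+2"] eq
    using card_Un_disjoint[OF _ _ d] fin2[of "n+2"] fin3[of n] c1 c2 by simp
qed

lemma Fc0: "Fc 0 = 1"
proof -
  have "{(i::nat, b::nat). i + 2*b \<le> 0} = {(0,0)}" by auto
  then show ?thesis unfolding Fc_def by simp
qed

lemma Fc1: "Fc 1 = 2"
proof -
  have "{(i::nat, b::nat). i + 2*b \<le> 1} = {(0,0),(1,0)}" by auto
  then show ?thesis unfolding Fc_def by simp
qed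

lemma Mc0: "Mc 0 = 1"
proof -
  have "{(i::nat, a::nat, b::nat). i + 2*a + 2*b \<le> 0} = {(0,0,0)}" by auto
  then show ?thesis unfolding Mc_def by simp
qed

lemma Mc1: "Mc 1 = 2"
proof -
  have "{(i::nat, a::nat, b::nat). i + 2*a + 2*b \<le> 1} = {(0,0,0),(1,0,0)}" by auto
  then show ?thesis unfolding Mc_def by simp
qed

lemma Fc_even: "Fc (2*u) = (u+1)*(u+1)"
  by (induction u) (simp_all add: Fc0 Fc_rec[of "2*_", simplified])

lemma Fc_odd: "Fc (2*u+1) = (u+1)*(u+2)"
proof (induction u)
  case 0 then show ?case using Fc1 by simp
next
  case (Suc u)
  have "Fc (2 * Suc u + 1) = Fc (2*u+1) + (2*u+1+3)" using Fc_rec[of "2*u+1"] by (simp add: algebra_simps)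
  then show ?case using Suc by (simp add: algebra_simps)
qed

lemma Mc_even: "6 * Mc (2*u) = (u+1)*(u+2)*(2*u+3)"
proof (induction u)
  case 0 then show ?case by (simp add: Mc0)
next
  case (Suc u)
  have "Mc (2 * Suc u) = Mc (2*u) + Fc (2 * Suc u)" using Mc_rec[of "2*u"] by (simp add: algebra_simps)
  then show ?case using Suc Fc_even[of "Suc u"] by (simp add: algebra_simps)
qed

lemma Mc_odd: "3 * Mc (2*u+1) = (u+1)*(u+2)*(u+3)"
proof (induction u)
  case 0 then show ?case using Mc1 by simp
next
  case (Suc u)
  have "Mc (2 * Suc u + 1) = Mc (2*u+1) + Fc (2 * Suc u + 1)" using Mc_rec[of "2*u+1"] by (simp add: algebra_simps)
  then show ?case using Suc Fc_odd[of "Suc u"] by (simp add: algebra_simps)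
qed

lemma choose2: "(Suc (Suc n) choose 2) * 2 = (n+2)*(n+1)"
  by (induction n) (simp_all add: numeral_eq_Suc algebra_simps)

lemma choose3: "((n+3) choose 3) * 6 = (n+3)*(n+2)*(n+1)"
proof (induction n)
  case 0 then show ?case by (simp add: numeral_eq_Suc)
next
  case (Suc n)
  have a: "(n+3) = Suc (Suc (Suc n))" by simp
  have "(Suc n + 3) choose 3 = (Suc (Suc (Suc n)) choose 2) + (Suc (Suc (Suc n)) choose 3)"
    by (simp add: numeral_eq_Suc)
  moreover have "(Suc (Suc (Suc n)) choose 2) * 2 = (n+3)*(n+2)" using choose2[of "Suc n"] by (simp add: algebra_simps)
  moreover have "(Suc (Suc (Suc n)) choose 3) * 6 = (n+3)*(n+2)*(n+1)" using Suc by (simp only: a)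
  ultimately show ?case by (simp add: algebra_simps)
qed

lemma Mc_a: "of_nat (Mc n) = a_seq (int n + 2)"
proof (cases "even n")
  case True
  then obtain u where u: "n = 2*u" by (auto elim: evenE)
  have e: "even (int n + 2)" using True by simp
  have nn: "nat (int n + 2 + 2) = (2*u+1) + 3" using u by simp
  have "of_nat (((2*u+1)+3) choose 3) * (6::rat) = of_nat ((2*u+1+3)*(2*u+1+2)*(2*u+1+1))"
    using choose3[of "2*u+1"] by (metis of_nat_mult of_nat_numeral)
  moreover have "6 * (of_nat (Mc n)::rat) = of_nat ((u+1)*(u+2)*(2*u+3))"
    using Mc_even[of u] u by (metis of_nat_mult of_nat_numeral)
  ultimately show ?thesis unfolding a_seq_def using e nn by (simp add: algebra_simps)
next
  case False
  then obtain u where u: "n = 2*u+1" by (auto elim: oddE)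
  have e: "\<not> even (int n + 2)" using False by simp
  have "3 * (of_nat (Mc n)::rat) = of_nat ((u+1)*(u+2)*(u+3))"
    using Mc_odd[of u] u by (metis of_nat_mult of_nat_numeral)
  then show ?thesis unfolding a_seq_def using e u by (simp add: algebra_simps)
qed

lemma a_small: "a_seq (-1) = 0" "a_seq 0 = 0" "a_seq 1 = 0"
  by (simp_all add: a_seq_def)

lemma count_formula:
  fixes k m :: nat
  assumes "k \<ge> 1" and "m \<ge> 1"
  defines "c \<equiv> 2 * ((m - k + 1) div 2) + 1"
  shows "(of_nat (if 2*c \<le> m then Mc (m - 2*c) else 0) :: rat) =
    (if m \<le> k then a_seq (int m)
     else if m < 2 * k \<and> even (m - k) then a_seq (2 * int k - int m)
     else if m < 2 * k \<and> odd (m - k) then a_seq (2 * int k - int m - 2)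
     else 0)"
proof -
  consider "m \<le> k" | "k < m" "m < 2*k" "even (m - k)" | "k < m" "m < 2*k" "odd (m - k)" | "2*k \<le> m" by linarith
  then show ?thesis
  proof cases
    case 1
    then have c: "c = 1" unfolding c_def by simp
    show ?thesis
    proof (cases "2 \<le> m")
      case True
      then have "int (m - 2) + 2 = int m" by simp
      then show ?thesis using 1 c True Mc_a[of "m-2"] by simp
    next
      case False
      then have "m = 1" using assms by simp
      then show ?thesis using 1 c by (simp add: a_seq_def)
    qed
  next
    case 2
    then have c: "c = m - k + 1" unfolding c_def by presburger
    show ?thesis
    proof (cases "2*c \<le> m")
      case le: True
      have "int (m - 2*c) + 2 = 2 * int k - int m" using le c 2 by linarith
      then have "(of_nat (Mc (m - 2*c)) :: rat) = a_seq (2 * int k - int m)" using Mc_a[of "m - 2*c"] by metis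
      then show ?thesis using 2 le by simp
    next
      case False
      then have "2 * int k - int m = 1" using c 2 by presburger
      then have "a_seq (2 * int k - int m) = 0" using a_small by metis
      then show ?thesis using 2 False by simp
    qed
  next
    case 3
    then have c: "c = m - k + 2" unfolding c_def by presburger
    show ?thesis
    proof (cases "2*c \<le> m")
      case True
      have "int (m - 2*c) + 2 = 2 * int k - int m - 2" using True c 3 by linarith
      then have "(of_nat (Mc (m - 2*c)) :: rat) = a_seq (2 * int k - int m - 2)" using Mc_a[of "m - 2*c"] by metis
      then show ?thesis using 3 True by simp
    next
      case False
      then have "2 * int k - int m - 2 = -1 \<or> 2 * int k - int m - 2 = 0 \<or> 2 * int k - int m - 2 = 1" using c 3 by presburger
      then have "a_seq (2 * int k - int m - 2) = 0" using a_small by metis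
      then show ?thesis using 3 False by simp
    qed
  next
    case 4
    then have "\<not> 2*c \<le> m" unfolding c_def by presburger
    then show ?thesis using 4 assms(1) by simp
  qed
qed

lemma odd1: "odd (r::nat) \<Longrightarrow> 1 \<le> r"
  by (cases r) auto

lemma odd1': "odd (r::nat) \<Longrightarrow> Suc 0 \<le> r"
  by (cases r) auto

lemma coord_lem: "1 \<le> k \<Longrightarrow> (odd (r::nat) \<and> m - r < k) = (\<exists>a. r = 2*a + (2*((m-k+1) div 2) + 1))"
  unfolding even_iff_mod_2_eq_zero by presburger

theorem theorem5p4:
  fixes k m :: nat
  assumes "k \<ge> 1" and "m \<ge> 1"
  shows "of_nat (card {p. p permutes {1..m} \<and> bigrassmannian m p \<and> odd_perm m p
                          \<and> avoids_id k m p}) =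
    (if m \<le> k then a_seq (int m)
     else if m < 2 * k \<and> even (m - k) then a_seq (2 * int k - int m)
     else if m < 2 * k \<and> odd (m - k) then a_seq (2 * int k - int m - 2)
     else 0)"
proof -
  define S where "S = {p. p permutes {1..m} \<and> bigrassmannian m p \<and> odd_perm m p \<and> avoids_id k m p}"
  define T where "T = {(i::nat, r::nat, s::nat). odd r \<and> odd s \<and> i + r + s \<le> m \<and> m - min r s < k}"
  have ST: "S = (\<lambda>(i,r,s). bs i r s) ` T"
  proof
    show "S \<subseteq> (\<lambda>(i,r,s). bs i r s) ` T"
    proof
      fix p assume "p \<in> S"
      then have p: "p permutes {1..m}" "bigrassmannian m p" "odd_perm m p" "avoids_id k m p"
        unfolding S_def by auto
      obtain i r s where irs: "i + r + s \<le> m" "p = bs i r s" using char[OF p(1,2)] by blast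
      have "odd (s * r)" using p(3) bs_card_inv[OF irs(1)] irs(2) unfolding odd_perm_def by simp
      then have od: "odd r" "odd s" by auto
      then have "1 \<le> r" "1 \<le> s" using odd1 by blast+
      then have "m - min r s < k" using bs_avoids[OF irs(1)] p(4) irs(2) by simp
      then have "(i, r, s) \<in> T" unfolding T_def using od irs by simp
      then show "p \<in> (\<lambda>(i,r,s). bs i r s) ` T" using irs(2) by (metis (no_types, lifting) case_prod_conv image_eqI)
    qed
    show "(\<lambda>(i,r,s). bs i r s) ` T \<subseteq> S"
    proof clarify
      fix i r s assume "(i, r, s) \<in> T"
      then have t: "odd r" "odd s" "i + r + s \<le> m" "m - min r s < k" unfolding T_def by auto
      then have "1 \<le> r" "1 \<le> s" using odd1 by blast+
      then show "bs i r s \<in> S" unfolding S_def odd_perm_def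
        using t bs_permutes bs_bigrass bs_card_inv bs_avoids by simp
    qed
  qed
  have inj: "inj_on (\<lambda>(i,r,s). bs i r s) T"
  proof (rule inj_onI)
    fix x y assume x: "x \<in> T" and y: "y \<in> T" and e: "(\<lambda>(i,r,s). bs i r s) x = (\<lambda>(i,r,s). bs i r s) y"
    obtain i r s where xx: "x = (i, r, s)" by (cases x) auto
    obtain i' r' s' where yy: "y = (i', r', s')" by (cases y) auto
    have "odd r" "odd s" "odd r'" "odd s'" using x y xx yy unfolding T_def by auto
    then have o: "1 \<le> r" "1 \<le> s" "1 \<le> r'" "1 \<le> s'" using odd1 by blast+
    have "bs i r s = bs i' r' s'" using e xx yy by simp
    then show "x = y" using bs_inj[OF o] xx yy by blast
  qed
  have cST: "card S = card T" using ST card_image[OF inj] by simp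
  define c where "c = 2 * ((m - k + 1) div 2) + 1"
  have coord: "\<And>r. (odd r \<and> m - r < k) \<longleftrightarrow> (\<exists>a. r = 2*a + c)" unfolding c_def using assms(1) by (rule coord_lem)
  have minsplit: "\<And>r s. m - min r s < k \<longleftrightarrow> m - r < k \<and> m - s < k" by (auto simp: min_def)
  define U where "U = {(i::nat, a::nat, b::nat). i + 2*a + 2*b + 2*c \<le> m}"
  have TU: "T = (\<lambda>(i,a,b). (i, 2*a+c, 2*b+c)) ` U"
  proof
    show "T \<subseteq> (\<lambda>(i,a,b). (i, 2*a+c, 2*b+c)) ` U"
    proof clarify
      fix i r s assume "(i, r, s) \<in> T"
      then have t: "odd r" "odd s" "i + r + s \<le> m" "m - r < k" "m - s < k" unfolding T_def minsplit by auto
      obtain a where a: "r = 2*a + c" using coord t by blast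
      obtain b where b: "s = 2*b + c" using coord t by blast
      have "(i, a, b) \<in> U" unfolding U_def using t a b by simp
      then show "(i, r, s) \<in> (\<lambda>(i,a,b). (i, 2*a+c, 2*b+c)) ` U" using a b by (metis (no_types, lifting) case_prod_conv image_eqI)
    qed
    show "(\<lambda>(i,a,b). (i, 2*a+c, 2*b+c)) ` U \<subseteq> T"
    proof clarify
      fix i a b assume "(i, a, b) \<in> U"
      then have u: "i + 2*a + 2*b + 2*c \<le> m" unfolding U_def by simp
      have "odd (2*a+c) \<and> m - (2*a+c) < k" using coord by blast
      moreover have "odd (2*b+c) \<and> m - (2*b+c) < k" using coord by blast
      ultimately show "(i, 2*a+c, 2*b+c) \<in> T" unfolding T_def minsplit using u by simp
    qed
  qed
  have injU: "inj_on (\<lambda>(i,a,b). (i, 2*a+c, 2*b+c)) U" by (auto simp: inj_on_def)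
  have cTU: "card T = card U" using TU card_image[OF injU] by simp
  have cU: "card U = (if 2*c \<le> m then Mc (m - 2*c) else 0)"
  proof (cases "2*c \<le> m")
    case True
    then have "U = {(i::nat, a::nat, b::nat). i + 2*a + 2*b \<le> m - 2*c}" unfolding U_def by auto
    then show ?thesis using True unfolding Mc_def by simp
  next
    case False
    then have "U = {}" unfolding U_def by auto
    then show ?thesis using False by simp
  qed
  have "card S = (if 2*c \<le> m then Mc (m - 2*c) else 0)" using cST cTU cU by simp
  then show ?thesis unfolding S_def[symmetric] using count_formula[OF assms] unfolding c_def by simp
qed

end
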